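(* Let $1\le q\le\infty$ and let $q^\ast$ be the conjugate exponent ($1/q+1/q^\ast=1$), with the convention $4/q^\ast=0$ when $q=1$. For $w$ in the unit disc let $k_w(z)=\frac{1}{1-\overline{w}z}$. Then, for $p\ge 0$, the inequality $\|k_w\|_p\le\|\psi\|_q$ holds for all $\psi\in L^q(\mathbb{T})$ with $P_+\psi=k_w$ and for all $w$ in the unit disc if and only if $p\le 4/q^\ast$. Moreover, if $\psi$ has minimal $L^q(\mathbb{T})$ norm among all functions with $P_+\psi=k_w$, then $\|\psi\|_q=\|k_w\|_{4/q^\ast}$ holds for all $w$ in the unit disc when $q=1$ or $q=2$, and only for $w=0$ otherwise.
   Context: $\mathbb{T}$ is the unit circle with normalized measure, $\|\cdot\|_p$ the $L^p(\mathbb{T})$ (quasi-)norm for $p>0$, and for a nontrivial function $\varphi$ in a Hardy space $H^p$ ($p>0$), $\|\varphi\|_0:=\exp\left(\int_0^{2\pi}\log|\varphi(e^{i\theta})|\frac{d\theta}{2\pi}\right)$. The Riesz projection is $P_+\psi=\sum_{n\ge0}\widehat\psi(n)e^{in\theta}$. *)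

theory Defs
  imports "HOL-Analysis.Analysis" "HOL-Probability.Essential_Supremum"
begin

text \<open>Functions on the unit circle are represented as functions of the angle
  theta in [0, 2 pi]; the normalized measure is d theta / (2 pi).\<close>

definition circle_measure :: "real measure" where
  "circle_measure = restrict_space lborel {0..2*pi}"

definition kw :: "complex \<Rightarrow> real \<Rightarrow> complex" where
  "kw w \<theta> = 1 / (1 - cnj w * exp (\<i> * complex_of_real \<theta>))"

definition in_Lq :: "ereal \<Rightarrow> (real \<Rightarrow> complex) \<Rightarrow> bool" where
  "in_Lq q f \<longleftrightarrow> f \<in> borel_measurable circle_measure \<and>
     (if q = \<infinity> then esssup circle_measure (\<lambda>\<theta>. ereal (cmod (f \<theta>))) < \<infinity>
      else set_integrable lborel {0..2*pi} (\<lambda>\<theta>. cmod (f \<theta>) powr real_of_ereal q))"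

definition Lp_norm :: "real \<Rightarrow> (real \<Rightarrow> complex) \<Rightarrow> real" where
  "Lp_norm p f = (if p = 0
      then exp ((LINT \<theta>:{0..2*pi}|lborel. ln (cmod (f \<theta>))) / (2*pi))
      else ((LINT \<theta>:{0..2*pi}|lborel. cmod (f \<theta>) powr p) / (2*pi)) powr (1/p))"

definition Lq_norm :: "ereal \<Rightarrow> (real \<Rightarrow> complex) \<Rightarrow> real" where
  "Lq_norm q f = (if q = \<infinity>
      then real_of_ereal (esssup circle_measure (\<lambda>\<theta>. ereal (cmod (f \<theta>))))
      else Lp_norm (real_of_ereal q) f)"

definition fourier_coeff :: "(real \<Rightarrow> complex) \<Rightarrow> int \<Rightarrow> complex" where
  "fourier_coeff f n =
     (LINT \<theta>:{0..2*pi}|lborel. f \<theta> * exp (- \<i> * of_int n * complex_of_real \<theta>)) / (2*pi)"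

text \<open>P_+ psi = g, understood at the level of Fourier coefficients:
  g has the coefficients of psi for n >= 0 and vanishing coefficients for n < 0.\<close>
definition riesz_proj_eq :: "(real \<Rightarrow> complex) \<Rightarrow> (real \<Rightarrow> complex) \<Rightarrow> bool" where
  "riesz_proj_eq \<psi> g \<longleftrightarrow>
     (\<forall>n::int. n \<ge> 0 \<longrightarrow> fourier_coeff \<psi> n = fourier_coeff g n) \<and>
     (\<forall>n::int. n < 0 \<longrightarrow> fourier_coeff g n = 0)"

text \<open>4/q* = 4(1 - 1/q), with 4/q* = 0 for q = 1 and 4/q* = 4 for q = infinity.\<close>
definition four_over_conj :: "ereal \<Rightarrow> real" where
  "four_over_conj q = (if q = \<infinity> then 4 else 4 * (1 - 1 / real_of_ereal q))"

definition minimal_preimage :: "ereal \<Rightarrow> complex \<Rightarrow> (real \<Rightarrow> complex) \<Rightarrow> bool" where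
  "minimal_preimage q w \<psi> \<longleftrightarrow> in_Lq q \<psi> \<and> riesz_proj_eq \<psi> (kw w) \<and>
     (\<forall>\<phi>. in_Lq q \<phi> \<and> riesz_proj_eq \<phi> (kw w) \<longrightarrow> Lq_norm q \<psi> \<le> Lq_norm q \<phi>)"

end

theory Submission
  imports Defs
begin


abbreviation CM where "CM \<equiv> circle_measure"

lemma space_C[simp]: "space CM = {0..2*pi}"
  by (simp add: circle_measure_def space_restrict_space)

lemma sets_C_ok: "{0..2*pi} \<inter> space lborel \<in> sets lborel" by simp

lemma C_integral: "(LINT \<theta>:{0..2*pi}|lborel. f \<theta>) = integral\<^sup>L CM f"
  for f :: "real \<Rightarrow> 'b::{banach, second_countable_topology}"
  by (simp add: circle_measure_def integral_restrict_space set_lebesgue_integral_def)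

lemma C_integrable: "set_integrable lborel {0..2*pi} f \<longleftrightarrow> integrable CM f"
  for f :: "real \<Rightarrow> 'b::{banach, second_countable_topology}"
  by (simp add: circle_measure_def integrable_restrict_space set_integrable_def)

lemma emeasure_C: "emeasure CM {0..2*pi} = ennreal (2*pi)"
  unfolding circle_measure_def
  by (subst emeasure_restrict_space) auto

interpretation C: finite_measure CM
  by (rule finite_measureI) (simp add: emeasure_C)

lemma measure_C: "measure CM {0..2*pi} = 2*pi"
  by (simp add: measure_def emeasure_C)

lemma cont_meas: "continuous_on {0..2*pi} f \<Longrightarrow> f \<in> borel_measurable CM"
  unfolding circle_measure_def
  using borel_measurable_continuous_on_restrict[of "{0..2*pi}" f]
  by (simp add: measurable_def sets_restrict_space)

lemma cont_integrable: "continuous_on {0..2*pi} f \<Longrightarrow> integrable CM f"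
  for f :: "real \<Rightarrow> 'b::{banach, second_countable_topology}"
  by (simp add: C_integrable[symmetric] set_integrable_def borel_integrable_compact)

definition ee :: "int \<Rightarrow> real \<Rightarrow> complex" where
  "ee n \<theta> = exp (\<i> * of_int n * of_real \<theta>)"

lemma ee_mult: "ee m \<theta> * ee n \<theta> = ee (m+n) \<theta>"
  by (simp add: ee_def exp_add[symmetric] algebra_simps)

lemma ee_cnj: "cnj (ee n \<theta>) = ee (-n) \<theta>"
  by (simp add: ee_def exp_cnj)

lemma norm_ee[simp]: "norm (ee n \<theta>) = 1"
  by (simp add: ee_def)

lemma ee_cont[continuous_intros]: "continuous_on A (ee n)"
  unfolding ee_def by (intro continuous_intros)

lemma ee_0[simp]: "ee 0 \<theta> = 1" by (simp add: ee_def)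

lemma int_ee: "integral\<^sup>L CM (ee m) = (if m = 0 then 2*pi else 0)"
proof (cases "m = 0")
  case True
  have "ee 0 = (\<lambda>_. 1)" by (rule ext) simp
  then show ?thesis using True by (simp add: measure_C scaleR_conv_of_real)
next
  case False
  have "(LBINT x=ereal 0..ereal (2*pi). ee m x) = (exp (\<i> * of_int m * of_real (2*pi)) / (\<i> * of_int m))
         - (exp (\<i> * of_int m * of_real 0) / (\<i> * of_int m))"
  proof (rule interval_integral_FTC_finite)
    show "continuous_on {min 0 (2 * pi)..max 0 (2 * pi)} (ee m)" by (intro continuous_intros)
    fix x :: real
    have "((\<lambda>x. exp (\<i> * of_int m * of_real x) / (\<i> * of_int m)) has_vector_derivative
          (exp (\<i> * of_int m * of_real x) * (\<i> * of_int m)) / (\<i> * of_int m)) (at x within {min 0 (2 * pi)..max 0 (2 * pi)})"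
      by (auto intro!: derivative_eq_intros has_vector_derivative_real_field)
    then show "((\<lambda>x. exp (\<i> * of_int m * of_real x) / (\<i> * of_int m)) has_vector_derivative
          ee m x) (at x within {min 0 (2 * pi)..max 0 (2 * pi)})"
      using False by (simp add: ee_def)
  qed
  also have "\<dots> = 0"
  proof -
    have "exp (\<i> * of_int m * of_real (2*pi)) = exp ((2 * of_int m * of_real pi) * \<i>)"
      by (simp add: algebra_simps)
    also have "\<dots> = 1" using exp_integer_2pi[of "of_int m"] by (simp add: Ints_of_int)
    finally show ?thesis by simp
  qed
  finally have "(LBINT x=ereal 0..ereal (2*pi). ee m x) = 0" .
  then show ?thesis using False
    by (simp add: interval_integral_Icc C_integral)
qed

lemma series_int:
  fixes c :: "nat \<Rightarrow> complex" and b :: "nat \<Rightarrow> real \<Rightarrow> complex"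
  assumes sc: "summable (\<lambda>n. norm (c n))"
    and bc: "\<And>n. continuous_on {0..2*pi} (b n)" and bb: "\<And>n \<theta>. norm (b n \<theta>) \<le> 1"
    and phi: "integrable CM \<phi>"
  shows "(\<lambda>n. c n * integral\<^sup>L CM (\<lambda>\<theta>. b n \<theta> * \<phi> \<theta>)) sums
           integral\<^sup>L CM (\<lambda>\<theta>. (\<Sum>n. c n * b n \<theta>) * \<phi> \<theta>)"
proof -
  define f where "f n \<theta> = c n * b n \<theta> * \<phi> \<theta>" for n \<theta>
  have meas: "b n \<in> borel_measurable CM" for n using bc cont_meas by blast
  have phim[measurable]: "\<phi> \<in> borel_measurable CM" using phi by auto
  have nf: "norm (f n \<theta>) \<le> norm (c n) * norm (\<phi> \<theta>)" for n \<theta>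
    unfolding f_def norm_mult using mult_right_mono[OF bb[of n \<theta>], of "norm (c n) * norm (\<phi> \<theta>)"]
    by (simp add: algebra_simps)
  have intf: "integrable CM (f n)" for n
  proof -
    have "integrable CM (\<lambda>\<theta>. norm (c n) * norm (\<phi> \<theta>))" using phi by auto
    then show ?thesis
    proof (rule Bochner_Integration.integrable_bound)
    show "f n \<in> borel_measurable CM" unfolding f_def using meas[of n] by measurable
    show "AE x in CM. norm (f n x) \<le> norm (norm (c n) * norm (\<phi> x))"
      using nf by (simp add: abs_mult)
  qed
  qed
  have s1: "AE \<theta> in CM. summable (\<lambda>n. norm (f n \<theta>))"
  proof (rule AE_I2)
    fix \<theta>
    show "summable (\<lambda>n. norm (f n \<theta>))"
      by (rule summable_comparison_test[OF _ summable_mult2[OF sc, of "norm (\<phi> \<theta>)"]])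
         (use nf in auto)
  qed
  have s2: "summable (\<lambda>n. integral\<^sup>L CM (\<lambda>\<theta>. norm (f n \<theta>)))"
  proof (rule summable_comparison_test[OF _ summable_mult2[OF sc, of "integral\<^sup>L CM (\<lambda>\<theta>. norm (\<phi> \<theta>))"]])
    show "\<exists>N. \<forall>n\<ge>N. norm (integral\<^sup>L CM (\<lambda>\<theta>. norm (f n \<theta>))) \<le> norm (c n) * integral\<^sup>L CM (\<lambda>\<theta>. norm (\<phi> \<theta>))"
    proof (intro exI allI impI)
      fix n
      have "integral\<^sup>L CM (\<lambda>\<theta>. norm (f n \<theta>)) \<le> integral\<^sup>L CM (\<lambda>\<theta>. norm (c n) * norm (\<phi> \<theta>))"
        using intf phi nf by (intro integral_mono) auto
      then show "norm (integral\<^sup>L CM (\<lambda>\<theta>. norm (f n \<theta>))) \<le> norm (c n) * integral\<^sup>L CM (\<lambda>\<theta>. norm (\<phi> \<theta>))"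
        by simp
    qed
  qed
  have "(\<lambda>n. integral\<^sup>L CM (f n)) sums integral\<^sup>L CM (\<lambda>\<theta>. \<Sum>n. f n \<theta>)"
    by (rule sums_integral[OF intf s1 s2])
  moreover have "integral\<^sup>L CM (f n) = c n * integral\<^sup>L CM (\<lambda>\<theta>. b n \<theta> * \<phi> \<theta>)" for n
    unfolding f_def by (simp add: mult.assoc)
  moreover have "(\<Sum>n. f n \<theta>) = (\<Sum>n. c n * b n \<theta>) * \<phi> \<theta>" for \<theta>
  proof -
    have "summable (\<lambda>n. c n * b n \<theta>)"
      by (rule summable_norm_cancel, rule summable_comparison_test[OF _ sc])
         (use bb in \<open>auto simp: norm_mult intro!: mult_right_le_one_le\<close>)
    then show ?thesis unfolding f_def by (simp add: suminf_mult2)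
  qed
  ultimately show ?thesis by simp
qed



definition uu :: "complex \<Rightarrow> real \<Rightarrow> complex" where
  "uu w \<theta> = 1 - cnj w * exp (\<i> * of_real \<theta>)"

definition G :: "real \<Rightarrow> complex \<Rightarrow> real \<Rightarrow> complex" where
  "G \<alpha> w \<theta> = uu w \<theta> powr (- of_real \<alpha>)"

definition cf :: "real \<Rightarrow> complex \<Rightarrow> nat \<Rightarrow> complex" where
  "cf \<alpha> w n = ((- of_real \<alpha>) gchoose n) * (- cnj w) ^ n"

lemma norm_uu_ge: "cmod w < 1 \<Longrightarrow> 1 - cmod w \<le> norm (uu w \<theta>)"
proof -
  assume "cmod w < 1"
  have "norm (cnj w * exp (\<i> * of_real \<theta>)) = cmod w" by (simp add: norm_mult)
  then show ?thesis unfolding uu_def using norm_triangle_ineq2[of 1 "cnj w * exp (\<i> * of_real \<theta>)"]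
    by simp
qed

lemma uu_nz: "cmod w < 1 \<Longrightarrow> uu w \<theta> \<noteq> 0"
  using norm_uu_ge[of w \<theta>] by auto

lemma Re_uu_pos: "cmod w < 1 \<Longrightarrow> Re (uu w \<theta>) > 0"
proof -
  assume a: "cmod w < 1"
  have "Re (cnj w * exp (\<i> * of_real \<theta>)) \<le> cmod (cnj w * exp (\<i> * of_real \<theta>))"
    by (rule complex_Re_le_cmod)
  also have "\<dots> = cmod w" by (simp add: norm_mult)
  finally show ?thesis using a by (simp add: uu_def)
qed

lemma uu_cont[continuous_intros]: "continuous_on A (uu w)"
  unfolding uu_def by (intro continuous_intros)

lemma G_cont[continuous_intros]: "cmod w < 1 \<Longrightarrow> continuous_on A (G \<alpha> w)"
  unfolding G_def
  by (intro continuous_intros) (auto simp: uu_nz less_imp_le[OF Re_uu_pos])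

lemma norm_G: "norm (G \<alpha> w \<theta>) = norm (uu w \<theta>) powr (- \<alpha>)"
  unfolding G_def by (simp add: norm_powr_real_powr')

lemma G_one: "cmod w < 1 \<Longrightarrow> G 1 w \<theta> = kw w \<theta>"
  unfolding G_def kw_def using uu_nz[of w \<theta>]
  by (simp add: powr_minus uu_def divide_inverse)

lemma G_add: "G (\<alpha> + \<beta>) w \<theta> = G \<alpha> w \<theta> * G \<beta> w \<theta>"
  unfolding G_def by (simp add: powr_add[symmetric])

lemma G_zero: "cmod w < 1 \<Longrightarrow> G 0 w \<theta> = 1"
  unfolding G_def using uu_nz[of w \<theta>] by simp

lemma pow_neg_mult: "(- (a * b)) ^ n = (- a) ^ n * (b :: complex) ^ n"
  by (metis mult_minus_left power_mult_distrib)

lemma cf_summable: "cmod w < 1 \<Longrightarrow> summable (\<lambda>n. norm (cf \<alpha> w n))"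
proof -
  assume a: "cmod w < 1"
  have "ereal (norm (norm (- cnj w))) < conv_radius (\<lambda>n. norm ((- of_real \<alpha> :: complex) gchoose n))"
    using a by (simp add: conv_radius_gchoose)
  from summable_in_conv_radius[OF this] show ?thesis
    by (simp add: cf_def norm_mult norm_power)
qed

lemma cf_sums: "cmod w < 1 \<Longrightarrow> (\<lambda>n. cf \<alpha> w n * ee (int n) \<theta>) sums G \<alpha> w \<theta>"
proof -
  assume a: "cmod w < 1"
  have "norm (- cnj w * exp (\<i> * of_real \<theta>)) < 1" using a by (simp add: norm_mult)
  from gen_binomial_complex[OF this, of "- of_real \<alpha>"]
  have "(\<lambda>n. ((- of_real \<alpha>) gchoose n) * (- cnj w * exp (\<i> * of_real \<theta>)) ^ n) sums G \<alpha> w \<theta>"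
    by (simp add: G_def uu_def)
  moreover have "((- of_real \<alpha>) gchoose n) * (- cnj w * exp (\<i> * of_real \<theta>)) ^ n = cf \<alpha> w n * ee (int n) \<theta>" for n
  proof -
    have "exp (\<i> * of_real \<theta>) ^ n = exp (of_nat n * (\<i> * of_real \<theta>))"
      by (simp add: exp_of_nat_mult)
    then show ?thesis by (simp add: cf_def ee_def pow_neg_mult mult_ac)
  qed
  ultimately show ?thesis by simp
qed

lemma cf_eval: "cmod w < 1 \<Longrightarrow> (\<lambda>n. cf \<alpha> w n * w ^ n) sums of_real ((1 - (cmod w)\<^sup>2) powr (- \<alpha>))"
proof -
  assume a: "cmod w < 1"
  have "norm (- (cnj w * w)) < 1" using a by (simp add: norm_mult abs_square_less_1 power2_eq_square[symmetric])
  have "(\<lambda>n. cf \<alpha> w n * w ^ n) sums (1 - cnj w * w) powr (- of_real \<alpha>)"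
  proof -
    have "cf \<alpha> w n * w ^ n = ((- of_real \<alpha>) gchoose n) * (- (cnj w * w)) ^ n" for n
      unfolding cf_def pow_neg_mult[of "cnj w" w] by (simp only: mult_ac)
    with gen_binomial_complex[OF \<open>norm (- (cnj w * w)) < 1\<close>, of "- of_real \<alpha>"] show ?thesis by simp
  qed
  moreover have "cnj w * w = of_real ((cmod w)\<^sup>2)" by (simp add: complex_norm_square[symmetric] mult.commute complex_mult_cnj[symmetric] del: complex_mult_cnj)
  moreover have "(1 - of_real ((cmod w)\<^sup>2)) powr (- of_real \<alpha>) = (of_real (1 - (cmod w)\<^sup>2) :: complex) powr (of_real (-\<alpha>))"
    by simp
  moreover have "\<dots> = of_real ((1 - (cmod w)\<^sup>2) powr (- \<alpha>))"
    using a by (intro powr_of_real) (simp add: abs_square_le_1 less_imp_le)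
  ultimately show ?thesis by simp
qed



lemma fc_alt: "fourier_coeff f n = integral\<^sup>L CM (\<lambda>\<theta>. ee (-n) \<theta> * f \<theta>) / (2*pi)"
  unfolding fourier_coeff_def C_integral ee_def by (simp add: mult_ac)

lemma G_series_int:
  assumes w: "cmod w < 1" and phi: "integrable CM \<phi>"
  shows "(\<lambda>n. cf \<alpha> w n * integral\<^sup>L CM (\<lambda>\<theta>. ee (int n) \<theta> * \<phi> \<theta>)) sums integral\<^sup>L CM (\<lambda>\<theta>. G \<alpha> w \<theta> * \<phi> \<theta>)"
proof -
  have "(\<lambda>n. cf \<alpha> w n * integral\<^sup>L CM (\<lambda>\<theta>. ee (int n) \<theta> * \<phi> \<theta>)) sums
           integral\<^sup>L CM (\<lambda>\<theta>. (\<Sum>n. cf \<alpha> w n * ee (int n) \<theta>) * \<phi> \<theta>)"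
    by (rule series_int[OF cf_summable[OF w] ee_cont _ phi]) simp
  moreover have "(\<Sum>n. cf \<alpha> w n * ee (int n) \<theta>) = G \<alpha> w \<theta>" for \<theta>
    using cf_sums[OF w] sums_unique by metis
  ultimately show ?thesis by simp
qed

lemma G_series_int_cnj:
  assumes w: "cmod w < 1" and phi: "integrable CM \<phi>"
  shows "(\<lambda>n. cnj (cf \<alpha> w n) * integral\<^sup>L CM (\<lambda>\<theta>. ee (- int n) \<theta> * \<phi> \<theta>)) sums integral\<^sup>L CM (\<lambda>\<theta>. cnj (G \<alpha> w \<theta>) * \<phi> \<theta>)"
proof -
  have "(\<lambda>n. cnj (cf \<alpha> w n) * integral\<^sup>L CM (\<lambda>\<theta>. ee (- int n) \<theta> * \<phi> \<theta>)) sums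
           integral\<^sup>L CM (\<lambda>\<theta>. (\<Sum>n. cnj (cf \<alpha> w n) * ee (- int n) \<theta>) * \<phi> \<theta>)"
    by (rule series_int[OF _ ee_cont _ phi]) (use cf_summable[OF w] in simp_all)
  moreover have "(\<Sum>n. cnj (cf \<alpha> w n) * ee (- int n) \<theta>) = cnj (G \<alpha> w \<theta>)" for \<theta>
  proof -
    have "(\<lambda>n. cnj (cf \<alpha> w n * ee (int n) \<theta>)) sums cnj (G \<alpha> w \<theta>)"
      by (rule iffD2[OF sums_cnj cf_sums[OF w]])
    then have "(\<lambda>n. cnj (cf \<alpha> w n) * ee (- int n) \<theta>) sums cnj (G \<alpha> w \<theta>)" by (simp add: ee_cnj)
    then show ?thesis by (rule sums_unique[symmetric])
  qed
  ultimately show ?thesis by simp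
qed

lemma fc_G: assumes w: "cmod w < 1"
  shows "fourier_coeff (G \<alpha> w) n = (if n \<ge> 0 then cf \<alpha> w (nat n) else 0)"
proof -
  have "(\<lambda>m. cf \<alpha> w m * integral\<^sup>L CM (\<lambda>\<theta>. ee (int m) \<theta> * ee (-n) \<theta>)) sums
         integral\<^sup>L CM (\<lambda>\<theta>. G \<alpha> w \<theta> * ee (-n) \<theta>)"
    by (rule G_series_int[OF w]) (auto intro!: cont_integrable continuous_intros)
  moreover have "cf \<alpha> w m * integral\<^sup>L CM (\<lambda>\<theta>. ee (int m) \<theta> * ee (-n) \<theta>) =
       (if m = nat n then (if n \<ge> 0 then cf \<alpha> w m * (2*pi) else 0) else 0)" for m
  proof -
    have "integral\<^sup>L CM (\<lambda>\<theta>. ee (int m) \<theta> * ee (-n) \<theta>) = integral\<^sup>L CM (ee (int m - n))"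
      by (simp add: ee_mult)
    then show ?thesis by (auto simp: int_ee)
  qed
  ultimately have "(\<lambda>m. if m = nat n then (if n \<ge> 0 then cf \<alpha> w m * (2*pi) else 0) else 0) sums
         integral\<^sup>L CM (\<lambda>\<theta>. G \<alpha> w \<theta> * ee (-n) \<theta>)"
    by simp
  moreover have "(\<lambda>m. if m = nat n then (if n \<ge> 0 then cf \<alpha> w m * (2*pi) else 0) else 0) sums
       (if n \<ge> 0 then cf \<alpha> w (nat n) * (2*pi) else 0)"
    using sums_single[of "nat n" "\<lambda>m. if n \<ge> 0 then cf \<alpha> w m * (2*pi) else 0"] by simp
  ultimately have "integral\<^sup>L CM (\<lambda>\<theta>. G \<alpha> w \<theta> * ee (-n) \<theta>) = (if n \<ge> 0 then cf \<alpha> w (nat n) * (2*pi) else 0)"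
    using sums_unique2 by blast
  then show ?thesis unfolding fc_alt by (simp add: mult.commute)
qed

lemma cf_one: "cf 1 w n = cnj w ^ n"
proof -
  have "(- 1 :: complex) gchoose n = (-1) ^ n"
    by (simp add: gbinomial_pochhammer pochhammer_fact[symmetric])
  then show ?thesis by (simp add: cf_def power_minus')
qed

lemma fc_kw: assumes w: "cmod w < 1"
  shows "fourier_coeff (kw w) n = (if n \<ge> 0 then cnj w ^ (nat n) else 0)"
proof -
  have "kw w = G 1 w" using G_one[OF w] by auto
  then show ?thesis using fc_G[OF w, of 1 n] by (simp add: cf_one)
qed

lemma dual:
  assumes w: "cmod w < 1" and phi: "integrable CM \<phi>"
  shows "(\<lambda>m. cnj (cf \<alpha> w m) * fourier_coeff \<phi> (int m)) sums (integral\<^sup>L CM (\<lambda>\<theta>. cnj (G \<alpha> w \<theta>) * \<phi> \<theta>) / (2*pi))"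
proof -
  from sums_divide[OF G_series_int_cnj[OF w phi, of \<alpha>], of "2*pi"]
  show ?thesis by (simp add: fc_alt)
qed

lemma key:
  assumes w: "cmod w < 1" and phi: "integrable CM \<phi>"
    and fc: "\<And>m. fourier_coeff \<phi> (int m) = z * cnj w ^ m"
  shows "integral\<^sup>L CM (\<lambda>\<theta>. cnj (G \<alpha> w \<theta>) * \<phi> \<theta>) / (2*pi) = z * of_real ((1 - (cmod w)\<^sup>2) powr (- \<alpha>))"
proof -
  have "(\<lambda>m. z * cnj (cf \<alpha> w m * w ^ m)) sums (z * cnj (of_real ((1 - (cmod w)\<^sup>2) powr (- \<alpha>))))"
    using sums_mult[OF iffD2[OF sums_cnj cf_eval[OF w]], of z] by simp
  moreover have "(\<lambda>m. z * cnj (cf \<alpha> w m * w ^ m)) = (\<lambda>m. cnj (cf \<alpha> w m) * fourier_coeff \<phi> (int m))"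
    by (rule ext) (simp add: fc)
  ultimately have "(\<lambda>m. cnj (cf \<alpha> w m) * fourier_coeff \<phi> (int m)) sums (z * of_real ((1 - (cmod w)\<^sup>2) powr (- \<alpha>)))"
    by simp
  with dual[OF w phi] show ?thesis using sums_unique2 by blast
qed

lemma fc_shift: "fourier_coeff (\<lambda>\<theta>. ee (-n) \<theta> * f \<theta>) m = fourier_coeff f (m + n)"
  unfolding fc_alt by (simp add: mult.assoc[symmetric] ee_mult)

lemma parseval:
  assumes w: "cmod w < 1"
  shows "integral\<^sup>L CM (\<lambda>\<theta>. (norm (G \<alpha> w \<theta>))\<^sup>2) / (2*pi) = (\<Sum>n. (norm (cf \<alpha> w n))\<^sup>2)"
    and "summable (\<lambda>n. (norm (cf \<alpha> w n))\<^sup>2)"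
proof -
  have i: "integrable CM (G \<alpha> w)" by (intro cont_integrable continuous_intros w)
  from dual[OF w i, of \<alpha>]
  have "(\<lambda>m. cnj (cf \<alpha> w m) * cf \<alpha> w m) sums (integral\<^sup>L CM (\<lambda>\<theta>. cnj (G \<alpha> w \<theta>) * G \<alpha> w \<theta>) / (2*pi))"
    by (simp add: fc_G[OF w])
  moreover have "cnj (cf \<alpha> w m) * cf \<alpha> w m = of_real ((norm (cf \<alpha> w m))\<^sup>2)" for m
    by (metis complex_norm_square mult.commute of_real_power)
  moreover have "integral\<^sup>L CM (\<lambda>\<theta>. cnj (G \<alpha> w \<theta>) * G \<alpha> w \<theta>) = of_real (integral\<^sup>L CM (\<lambda>\<theta>. (norm (G \<alpha> w \<theta>))\<^sup>2))"
  proof -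
    have "(\<lambda>\<theta>. cnj (G \<alpha> w \<theta>) * G \<alpha> w \<theta>) = (\<lambda>\<theta>. of_real ((norm (G \<alpha> w \<theta>))\<^sup>2))"
      by (rule ext) (metis complex_norm_square mult.commute of_real_power)
    then show ?thesis by (simp only: integral_complex_of_real)
  qed
  ultimately have "(\<lambda>m. of_real ((norm (cf \<alpha> w m))\<^sup>2)) sums (of_real (integral\<^sup>L CM (\<lambda>\<theta>. (norm (G \<alpha> w \<theta>))\<^sup>2) / (2*pi)) :: complex)"
    by simp
  then have s: "(\<lambda>m. (norm (cf \<alpha> w m))\<^sup>2) sums (integral\<^sup>L CM (\<lambda>\<theta>. (norm (G \<alpha> w \<theta>))\<^sup>2) / (2*pi))"
    by (simp only: sums_of_real_iff)
  then show "integral\<^sup>L CM (\<lambda>\<theta>. (norm (G \<alpha> w \<theta>))\<^sup>2) / (2*pi) = (\<Sum>n. (norm (cf \<alpha> w n))\<^sup>2)"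
    by (simp add: sums_unique)
  show "summable (\<lambda>n. (norm (cf \<alpha> w n))\<^sup>2)" using s by (simp add: sums_summable)
qed



lemma poch_nonneg: "0 \<le> a \<Longrightarrow> 0 \<le> pochhammer a n" for a :: real
  by (cases "a = 0") (auto intro: pochhammer_nonneg simp: pochhammer_0_left)

lemma norm_cf: "\<alpha> \<ge> 0 \<Longrightarrow> norm (cf \<alpha> w n) = pochhammer \<alpha> n / fact n * cmod w ^ n"
proof -
  assume a: "\<alpha> \<ge> 0"
  have "(- of_real \<alpha> :: complex) gchoose n = (-1) ^ n * of_real (pochhammer \<alpha> n / fact n)"
    by (simp add: gbinomial_pochhammer pochhammer_of_real)
  moreover have "pochhammer \<alpha> n \<ge> 0"
    using a by (cases "\<alpha> = 0") (auto intro: pochhammer_nonneg simp: pochhammer_0_left)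
  ultimately show ?thesis by (simp add: cf_def norm_mult norm_power norm_divide)
qed

lemma poch_sq_le: "0 \<le> a \<Longrightarrow> (pochhammer a n)\<^sup>2 \<le> pochhammer (a\<^sup>2) n * fact n" for a :: real
proof (induction n)
  case 0 then show ?case by simp
next
  case (Suc n)
  have k: "(a + real n)\<^sup>2 \<le> (a\<^sup>2 + real n) * (real n + 1)"
  proof -
    have "0 \<le> real n * (a - 1)\<^sup>2" by simp
    then show ?thesis by (simp add: power2_eq_square algebra_simps)
  qed
  have "(pochhammer a (Suc n))\<^sup>2 = (pochhammer a n)\<^sup>2 * (a + real n)\<^sup>2"
    by (simp add: pochhammer_Suc power_mult_distrib)
  also have "\<dots> \<le> (pochhammer (a\<^sup>2) n * fact n) * ((a\<^sup>2 + real n) * (real n + 1))"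
    using Suc k poch_nonneg[of "a\<^sup>2" n] by (intro mult_mono) auto
  also have "\<dots> = pochhammer (a\<^sup>2) (Suc n) * fact (Suc n)"
    by (simp add: pochhammer_Suc algebra_simps)
  finally show ?case .
qed

lemma poch_mono: "0 \<le> a \<Longrightarrow> a \<le> b \<Longrightarrow> pochhammer a n \<le> pochhammer b n" for a b :: real
proof (induction n)
  case 0 then show ?case by simp
next
  case (Suc n)
  have "0 \<le> pochhammer a n"
    using Suc.prems by (cases "a = 0") (auto intro: pochhammer_nonneg simp: pochhammer_0_left)
  then show ?case using Suc by (simp add: pochhammer_Suc mult_mono)
qed

lemma binom_real: "0 \<le> x \<Longrightarrow> x < 1 \<Longrightarrow> (\<lambda>n. pochhammer b n / fact n * x ^ n) sums ((1 - x) powr (- b))"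
  for x b :: real
proof -
  assume "0 \<le> x" "x < 1"
  then have "\<bar>- x\<bar> < 1" by simp
  from gen_binomial_real[OF this, of "-b"]
  have "(\<lambda>n. ((-b) gchoose n) * (-x) ^ n) sums ((1 - x) powr (- b))" by simp
  moreover have "(\<lambda>n. ((-b) gchoose n) * (-x) ^ n) = (\<lambda>n. pochhammer b n / fact n * x ^ n)"
  proof (rule ext)
    fix n
    have "((-1::real) ^ n) * (-1) ^ n = 1" by (simp add: power_mult_distrib[symmetric])
    then show "((-b) gchoose n) * (-x) ^ n = pochhammer b n / fact n * x ^ n"
      unfolding gbinomial_pochhammer power_minus[of x] by (simp add: field_simps)
  qed
  ultimately show ?thesis by simp
qed

lemma cf_sq: "\<alpha> \<ge> 0 \<Longrightarrow> (norm (cf \<alpha> w n))\<^sup>2 = (pochhammer \<alpha> n / fact n)\<^sup>2 * ((cmod w)\<^sup>2) ^ n"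
proof -
  assume a: "\<alpha> \<ge> 0"
  have "((cmod w)\<^sup>2) ^ n = (cmod w ^ n)\<^sup>2" by (simp add: power_mult[symmetric] mult.commute)
  then show ?thesis by (simp add: norm_cf[OF a] power_divide power_mult_distrib)
qed

lemma upper:
  assumes w: "cmod w < 1" and a: "0 \<le> \<alpha>" and b: "\<alpha>\<^sup>2 \<le> b"
  shows "(\<Sum>n. (norm (cf \<alpha> w n))\<^sup>2) \<le> (1 - (cmod w)\<^sup>2) powr (- b)"
proof -
  have x: "0 \<le> (cmod w)\<^sup>2" "(cmod w)\<^sup>2 < 1" using w by (auto simp: abs_square_less_1)
  have "(\<Sum>n. (norm (cf \<alpha> w n))\<^sup>2) \<le> (\<Sum>n. pochhammer b n / fact n * ((cmod w)\<^sup>2) ^ n)"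
  proof (rule suminf_le)
    fix n
    have "(pochhammer \<alpha> n / fact n)\<^sup>2 = (pochhammer \<alpha> n)\<^sup>2 / fact n / fact n"
      by (simp add: power2_eq_square)
    also have "\<dots> \<le> pochhammer (\<alpha>\<^sup>2) n * fact n / fact n / fact n"
      using poch_sq_le[OF a, of n] by (intro divide_right_mono) auto
    also have "\<dots> = pochhammer (\<alpha>\<^sup>2) n / fact n" by simp
    also have "\<dots> \<le> pochhammer b n / fact n"
      using poch_mono[of "\<alpha>\<^sup>2" b n] b by (intro divide_right_mono) auto
    finally show "(norm (cf \<alpha> w n))\<^sup>2 \<le> pochhammer b n / fact n * ((cmod w)\<^sup>2) ^ n"
      unfolding cf_sq[OF a] using x by (intro mult_right_mono) auto
    show "summable (\<lambda>n. (norm (cf \<alpha> w n))\<^sup>2)" by (rule parseval(2)[OF w])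
    show "summable (\<lambda>n. pochhammer b n / fact n * ((cmod w)\<^sup>2) ^ n)"
      using binom_real[OF x] by (rule sums_summable)
  qed
  also have "\<dots> = (1 - (cmod w)\<^sup>2) powr (- b)" using binom_real[OF x] by (rule sums_unique[symmetric])
  finally show ?thesis .
qed

lemma upper_strict:
  assumes w: "cmod w < 1" "w \<noteq> 0" and a: "0 < \<alpha>" "\<alpha> \<noteq> 1"
  shows "(\<Sum>n. (norm (cf \<alpha> w n))\<^sup>2) < (1 - (cmod w)\<^sup>2) powr (- (\<alpha>\<^sup>2))"
proof -
  define x where "x = (cmod w)\<^sup>2"
  have x: "0 \<le> x" "x < 1" using w by (auto simp: abs_square_less_1 x_def)
  have xp: "0 < x" using w by (simp add: x_def)
  define f where "f n = (norm (cf \<alpha> w n))\<^sup>2" for n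
  define g where "g n = pochhammer (\<alpha>\<^sup>2) n / fact n * x ^ n" for n
  have sf: "summable f" unfolding f_def by (rule parseval(2)[OF w(1)])
  have sg: "summable g" unfolding g_def using binom_real[OF x] by (rule sums_summable)
  have le: "f n \<le> g n" for n
  proof -
    have "(pochhammer \<alpha> n / fact n)\<^sup>2 = (pochhammer \<alpha> n)\<^sup>2 / fact n / fact n"
      by (simp add: power2_eq_square)
    also have "\<dots> \<le> pochhammer (\<alpha>\<^sup>2) n * fact n / fact n / fact n"
      using poch_sq_le[of \<alpha> n] a by (intro divide_right_mono) auto
    also have "\<dots> = pochhammer (\<alpha>\<^sup>2) n / fact n" by simp
    finally show ?thesis unfolding f_def g_def cf_sq[OF less_imp_le[OF a(1)]] x_def[symmetric]
      using x by (intro mult_right_mono) auto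
  qed
  have lt: "f 2 < g 2"
  proof -
    have "\<alpha>\<^sup>2 * (\<alpha> - 1)\<^sup>2 > 0" using a by simp
    moreover have "\<alpha>\<^sup>2 * (\<alpha>\<^sup>2 + 1) * 2 - (\<alpha> * (\<alpha> + 1))\<^sup>2 = \<alpha>\<^sup>2 * (\<alpha> - 1)\<^sup>2"
      by (simp add: power2_eq_square algebra_simps)
    ultimately have "(\<alpha> * (\<alpha> + 1))\<^sup>2 < \<alpha>\<^sup>2 * (\<alpha>\<^sup>2 + 1) * 2"
      by linarith
    then have "(\<alpha> * (\<alpha> + 1) / 2)\<^sup>2 < \<alpha>\<^sup>2 * (\<alpha>\<^sup>2 + 1) / 2"
      by (simp add: power2_eq_square field_simps)
    then have "(\<alpha> * (\<alpha> + 1) / 2)\<^sup>2 * x\<^sup>2 < \<alpha>\<^sup>2 * (\<alpha>\<^sup>2 + 1) / 2 * x\<^sup>2"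
      using xp by (intro mult_strict_right_mono) auto
    then show ?thesis unfolding f_def g_def cf_sq[OF less_imp_le[OF a(1)]] x_def[symmetric]
      by (simp add: pochhammer_Suc numeral_2_eq_2 fact_Suc)
  qed
  have "0 < (\<Sum>n. g n - f n)"
    by (rule suminf_pos2[of _ 2]) (use summable_diff[OF sg sf] le lt in auto)
  then have "(\<Sum>n. f n) < (\<Sum>n. g n)" using suminf_diff[OF sg sf] by simp
  also have "(\<Sum>n. g n) = (1 - x) powr (- (\<alpha>\<^sup>2))" unfolding g_def
    using binom_real[OF x] by (rule sums_unique[symmetric])
  finally show ?thesis unfolding f_def x_def .
qed

lemma lower:
  assumes w: "cmod w < 1" and a: "0 \<le> \<alpha>"
  shows "1 + \<alpha>\<^sup>2 * (cmod w)\<^sup>2 \<le> (\<Sum>n. (norm (cf \<alpha> w n))\<^sup>2)"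
proof -
  have "(\<Sum>n<2. (norm (cf \<alpha> w n))\<^sup>2) \<le> (\<Sum>n. (norm (cf \<alpha> w n))\<^sup>2)"
    by (rule sum_le_suminf[OF parseval(2)[OF w]]) auto
  moreover have "(\<Sum>n<2. (norm (cf \<alpha> w n))\<^sup>2) = 1 + \<alpha>\<^sup>2 * (cmod w)\<^sup>2"
  proof -
    have "{..<2::nat} = {0, 1}" by auto
    then show ?thesis by (simp add: cf_sq[OF a])
  qed
  ultimately show ?thesis by simp
qed

lemma T_one: "cmod w < 1 \<Longrightarrow> (\<Sum>n. (norm (cf 1 w n))\<^sup>2) = 1 / (1 - (cmod w)\<^sup>2)"
proof -
  assume w: "cmod w < 1"
  have "norm ((cmod w)\<^sup>2) < 1" using w by (simp add: abs_square_less_1)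
  from geometric_sums[OF this] have "(\<lambda>n. ((cmod w)\<^sup>2) ^ n) sums (1 / (1 - (cmod w)\<^sup>2))" .
  moreover have "(\<lambda>n. (norm (cf 1 w n))\<^sup>2) = (\<lambda>n. ((cmod w)\<^sup>2) ^ n)"
    by (rule ext) (simp add: cf_one norm_power power_mult[symmetric] mult.commute[of 2])
  ultimately show ?thesis by (metis sums_unique)
qed



lemma norm_kw: "cmod w < 1 \<Longrightarrow> cmod (kw w \<theta>) = 1 / norm (uu w \<theta>)"
  by (simp add: kw_def uu_def norm_divide)

lemma kw_powr: "cmod w < 1 \<Longrightarrow> cmod (kw w \<theta>) powr p = (norm (G (p/2) w \<theta>))\<^sup>2"
proof -
  assume w: "cmod w < 1"
  have pos: "norm (uu w \<theta>) > 0" using uu_nz[OF w] by simp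
  have "(norm (G (p/2) w \<theta>))\<^sup>2 = norm (uu w \<theta>) powr (- (p/2)) * norm (uu w \<theta>) powr (- (p/2))"
    by (simp add: norm_G power2_eq_square)
  also have "\<dots> = norm (uu w \<theta>) powr (- p)" by (simp add: powr_add[symmetric])
  also have "\<dots> = cmod (kw w \<theta>) powr p"
    using pos by (simp add: norm_kw[OF w] powr_minus_divide powr_divide)
  finally show ?thesis ..
qed

lemma Lp_kw: assumes w: "cmod w < 1" and p: "p \<noteq> 0"
  shows "Lp_norm p (kw w) = (\<Sum>n. (norm (cf (p/2) w n))\<^sup>2) powr (1/p)"
proof -
  have "(LINT \<theta>:{0..2*pi}|lborel. cmod (kw w \<theta>) powr p) = integral\<^sup>L CM (\<lambda>\<theta>. (norm (G (p/2) w \<theta>))\<^sup>2)"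
    by (simp add: C_integral kw_powr[OF w])
  then show ?thesis using p by (simp add: Lp_norm_def parseval(1)[OF w])
qed

lemma ln_int_zero: assumes w: "cmod w < 1"
  shows "integral\<^sup>L CM (\<lambda>\<theta>. ln (norm (uu w \<theta>))) = 0"
proof -
  define d where "d n = - (cnj w ^ n) / of_nat n" for n
  have sd: "summable (\<lambda>n. norm (d n))"
  proof (rule summable_comparison_test[of _ "\<lambda>n. cmod w ^ n"])
    show "\<exists>N. \<forall>n\<ge>N. norm (norm (d n)) \<le> cmod w ^ n"
    proof (intro exI allI impI)
      fix n :: nat assume "n \<ge> 1"
      then have "cmod w ^ n * 1 \<le> cmod w ^ n * real n" by (intro mult_left_mono) auto
      then show "norm (norm (d n)) \<le> cmod w ^ n"
        using \<open>n \<ge> 1\<close> by (simp add: d_def norm_divide norm_power field_simps)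
    qed
    show "summable (\<lambda>n. cmod w ^ n)" using w by (simp add: summable_geometric)
  qed
  have ser: "(\<Sum>n. d n * ee (int n) \<theta>) = Ln (uu w \<theta>)" for \<theta>
  proof -
    have "cmod (- cnj w * exp (\<i> * of_real \<theta>)) < 1" using w by (simp add: norm_mult)
    from Ln_series'[OF this]
    have "(\<lambda>n. - ((cnj w * exp (\<i> * of_real \<theta>)) ^ n) / of_nat n) sums Ln (uu w \<theta>)"
      by (simp add: uu_def)
    moreover have "(\<lambda>n. - ((cnj w * exp (\<i> * of_real \<theta>)) ^ n) / of_nat n) = (\<lambda>n. d n * ee (int n) \<theta>)"
    proof (rule ext)
      fix n
      have "exp (\<i> * of_real \<theta>) ^ n = exp (of_nat n * (\<i> * of_real \<theta>))"
        by (simp add: exp_of_nat_mult)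
      then show "- ((cnj w * exp (\<i> * of_real \<theta>)) ^ n) / of_nat n = d n * ee (int n) \<theta>"
        by (simp add: d_def ee_def power_mult_distrib mult_ac)
    qed
    ultimately show ?thesis by (metis sums_unique)
  qed
  have "(\<lambda>n. d n * integral\<^sup>L CM (\<lambda>\<theta>. ee (int n) \<theta> * 1)) sums integral\<^sup>L CM (\<lambda>\<theta>. (\<Sum>n. d n * ee (int n) \<theta>) * 1)"
    by (rule series_int[OF sd ee_cont]) auto
  moreover have "(\<lambda>n. d n * integral\<^sup>L CM (\<lambda>\<theta>. ee (int n) \<theta> * 1)) = (\<lambda>n. 0)"
  proof (rule ext)
    fix n :: nat
    show "d n * integral\<^sup>L CM (\<lambda>\<theta>. ee (int n) \<theta> * 1) = 0"
      by (cases "n = 0") (auto simp: d_def int_ee)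
  qed
  ultimately have z: "integral\<^sup>L CM (\<lambda>\<theta>. Ln (uu w \<theta>)) = 0"
    using sums_unique2[OF sums_zero] by (simp add: ser)
  have ci: "integrable CM (\<lambda>\<theta>. Ln (uu w \<theta>))"
  proof (rule cont_integrable, intro continuous_intros)
    fix \<theta> assume "\<theta> \<in> {0..2*pi}"
    show "uu w \<theta> \<notin> \<real>\<^sub>\<le>\<^sub>0" using Re_uu_pos[OF w, of \<theta>]
      by (auto simp: nonpos_Reals_def)
  qed
  have "has_bochner_integral CM (\<lambda>\<theta>. Re (Ln (uu w \<theta>))) (Re (integral\<^sup>L CM (\<lambda>\<theta>. Ln (uu w \<theta>))))"
    by (rule has_bochner_integral_Re) (use ci in \<open>simp add: has_bochner_integral_iff\<close>)
  then have "integral\<^sup>L CM (\<lambda>\<theta>. Re (Ln (uu w \<theta>))) = 0" using z by (simp add: has_bochner_integral_iff)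
  moreover have "Re (Ln (uu w \<theta>)) = ln (norm (uu w \<theta>))" for \<theta> using uu_nz[OF w] by simp
  ultimately show ?thesis by simp
qed

lemma Lp_kw0: assumes w: "cmod w < 1" shows "Lp_norm 0 (kw w) = 1"
proof -
  have "ln (cmod (kw w \<theta>)) = - ln (norm (uu w \<theta>))" for \<theta>
    using uu_nz[OF w, of \<theta>] by (simp add: norm_kw[OF w] ln_div)
  then have "(LINT \<theta>:{0..2*pi}|lborel. ln (cmod (kw w \<theta>))) = - integral\<^sup>L CM (\<lambda>\<theta>. ln (norm (uu w \<theta>)))"
    by (simp add: C_integral)
  then show ?thesis by (simp add: Lp_norm_def ln_int_zero[OF w])
qed



lemma holder:
  fixes f g :: "real \<Rightarrow> real"
  assumes pq: "1 < p" "1 < q" "1/p + 1/q = 1"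
    and fm[measurable]: "f \<in> borel_measurable CM" and gm[measurable]: "g \<in> borel_measurable CM"
    and f0: "\<And>x. 0 \<le> f x" and g0: "\<And>x. 0 \<le> g x"
    and fi: "integrable CM (\<lambda>x. f x powr p)" and gi: "integrable CM (\<lambda>x. g x powr q)"
    and A: "0 < integral\<^sup>L CM (\<lambda>x. f x powr p)" and B: "0 < integral\<^sup>L CM (\<lambda>x. g x powr q)"
  shows "integrable CM (\<lambda>x. f x * g x)"
    and "integral\<^sup>L CM (\<lambda>x. f x * g x) \<le> integral\<^sup>L CM (\<lambda>x. f x powr p) powr (1/p) * integral\<^sup>L CM (\<lambda>x. g x powr q) powr (1/q)"
proof -
  define A where "A = integral\<^sup>L CM (\<lambda>x. f x powr p)"
  define B where "B = integral\<^sup>L CM (\<lambda>x. g x powr q)"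
  have Ap: "A > 0" and Bp: "B > 0" using A B by (auto simp: A_def B_def)
  define K where "K = A powr (1/p) * B powr (1/q)"
  have Kp: "K > 0" using Ap Bp by (simp add: K_def)
  have young: "f x * g x / K \<le> f x powr p / (p * A) + g x powr q / (q * B)" for x
  proof -
    have "(f x / A powr (1/p)) * (g x / B powr (1/q)) \<le> (f x / A powr (1/p)) powr p / p + (g x / B powr (1/q)) powr q / q"
      using f0[of x] g0[of x] Ap Bp pq by (intro Youngs_inequality) auto
    also have "(f x / A powr (1/p)) powr p = f x powr p / A"
      using f0[of x] Ap pq by (simp add: powr_divide powr_powr)
    also have "(g x / B powr (1/q)) powr q = g x powr q / B"
      using g0[of x] Bp pq by (simp add: powr_divide powr_powr)
    finally show ?thesis by (simp add: K_def field_simps)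
  qed
  have bnd: "integrable CM (\<lambda>x. f x powr p / (p * A) + g x powr q / (q * B))"
    using fi gi by auto
  have i1: "integrable CM (\<lambda>x. f x * g x / K)"
  proof (rule Bochner_Integration.integrable_bound[OF bnd])
    show "(\<lambda>x. f x * g x / K) \<in> borel_measurable CM" by measurable
    show "AE x in CM. norm (f x * g x / K) \<le> norm (f x powr p / (p * A) + g x powr q / (q * B))"
      using young f0 g0 Kp by (intro AE_I2) (smt (verit) divide_nonneg_pos mult_nonneg_nonneg real_norm_def)
  qed
  then have i2: "integrable CM (\<lambda>x. K * (f x * g x / K))" by (rule integrable_mult_right)
  moreover have "(\<lambda>x. K * (f x * g x / K)) = (\<lambda>x. f x * g x)" using Kp by (intro ext) simp
  ultimately show "integrable CM (\<lambda>x. f x * g x)" by simp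
  have "integral\<^sup>L CM (\<lambda>x. f x * g x / K) \<le> integral\<^sup>L CM (\<lambda>x. f x powr p / (p * A) + g x powr q / (q * B))"
    by (rule integral_mono[OF i1 bnd young])
  also have "\<dots> = A / (p * A) + B / (q * B)"
    using fi gi by (simp add: A_def B_def)
  also have "\<dots> = 1" using Ap Bp pq by simp
  finally have "integral\<^sup>L CM (\<lambda>x. f x * g x) / K \<le> 1" by simp
  then show "integral\<^sup>L CM (\<lambda>x. f x * g x) \<le> A powr (1/p) * B powr (1/q)"
    using Kp by (simp add: K_def divide_le_eq)
qed



lemma AE_False_CM: "(AE x in CM. False) \<Longrightarrow> False"
proof -
  assume "AE x in CM. False"
  then have "ae_filter CM = bot" by (simp add: eventually_False)
  then have "emeasure CM (space CM) = 0" by (simp add: ae_filter_eq_bot_iff)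
  then show False by (simp add: emeasure_C)
qed

lemma esssup_fin:
  assumes m: "\<psi> \<in> borel_measurable CM"
    and e: "esssup CM (\<lambda>\<theta>. ereal (cmod (\<psi> \<theta>))) < \<infinity>"
  shows "AE \<theta> in CM. cmod (\<psi> \<theta>) \<le> real_of_ereal (esssup CM (\<lambda>\<theta>. ereal (cmod (\<psi> \<theta>))))"
    and "0 \<le> real_of_ereal (esssup CM (\<lambda>\<theta>. ereal (cmod (\<psi> \<theta>))))"
proof -
  define E where "E = esssup CM (\<lambda>\<theta>. ereal (cmod (\<psi> \<theta>)))"
  have ae: "AE \<theta> in CM. ereal (cmod (\<psi> \<theta>)) \<le> E" unfolding E_def by (rule esssup_AE)
  have "E \<ge> 0"
  proof (rule ccontr)
    assume "\<not> E \<ge> 0"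
    assume nE: "\<not> E \<ge> 0"
    have h: "ereal (cmod (\<psi> \<theta>)) \<le> E \<longrightarrow> False" for \<theta>
    proof
      assume "ereal (cmod (\<psi> \<theta>)) \<le> E"
      moreover have "0 \<le> ereal (cmod (\<psi> \<theta>))" by simp
      ultimately have "0 \<le> E" by (rule order_trans[rotated])
      then show False using nE by simp
    qed
    have "AE \<theta> in CM. False" by (rule AE_mp[OF ae]) (rule AE_I2, rule h)
    then show False by (rule AE_False_CM)
  qed
  then have Ef: "E = ereal (real_of_ereal E)" using e unfolding E_def[symmetric]
    by (cases E) auto
  show "AE \<theta> in CM. cmod (\<psi> \<theta>) \<le> real_of_ereal E"
    using ae by eventually_elim (subst (asm) Ef, simp)
  show "0 \<le> real_of_ereal E" using \<open>E \<ge> 0\<close> by (simp add: real_of_ereal_pos)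
qed

lemma Lq_integrable:
  assumes q: "1 \<le> q" and L: "in_Lq q \<psi>"
  shows "integrable CM \<psi>"
proof -
  have m[measurable]: "\<psi> \<in> borel_measurable CM" using L by (simp add: in_Lq_def circle_measure_def)
  show ?thesis
  proof (cases "q = \<infinity>")
    case True
    then have "esssup CM (\<lambda>\<theta>. ereal (cmod (\<psi> \<theta>))) < \<infinity>" using L by (simp add: in_Lq_def)
    from esssup_fin(1)[OF m this] show ?thesis by (intro C.integrable_const_bound[OF _ m])
  next
    case False
    then obtain q' where q': "q = ereal q'" using q by (cases q) auto
    then have q1: "1 \<le> q'" using q by simp
    have i: "integrable CM (\<lambda>\<theta>. cmod (\<psi> \<theta>) powr q')"
      using L False q' by (simp add: in_Lq_def C_integrable)
    then have i2: "integrable CM (\<lambda>\<theta>. 1 + cmod (\<psi> \<theta>) powr q')" by simp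
    show ?thesis
    proof (rule Bochner_Integration.integrable_bound[OF i2 m], rule AE_I2)
      fix x
      show "norm (\<psi> x) \<le> norm (1 + cmod (\<psi> x) powr q')"
      proof (cases "cmod (\<psi> x) \<le> 1")
        case True
        have h: "0 \<le> cmod (\<psi> x) powr q'" by simp
        then have "norm (1 + cmod (\<psi> x) powr q') = 1 + cmod (\<psi> x) powr q'" by simp
        then show ?thesis using True h by linarith
      next
        case False
        then have "cmod (\<psi> x) powr 1 \<le> cmod (\<psi> x) powr q'" using q1 by (intro powr_mono) auto
        then show ?thesis using False by simp
      qed
    qed
  qed
qed

lemma fc_psi: "cmod w < 1 \<Longrightarrow> riesz_proj_eq \<psi> (kw w) \<Longrightarrow> fourier_coeff \<psi> (int m) = 1 * cnj w ^ m"
  by (simp add: riesz_proj_eq_def fc_kw)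

lemma int_cnjG:
  assumes w: "cmod w < 1" and i: "integrable CM \<psi>" and r: "riesz_proj_eq \<psi> (kw w)"
  shows "integral\<^sup>L CM (\<lambda>\<theta>. cnj (G \<alpha> w \<theta>) * \<psi> \<theta>) = of_real (2*pi * (1 - (cmod w)\<^sup>2) powr (- \<alpha>))"
proof -
  have "integral\<^sup>L CM (\<lambda>\<theta>. cnj (G \<alpha> w \<theta>) * \<psi> \<theta>) / (2*pi) = 1 * of_real ((1 - (cmod w)\<^sup>2) powr (- \<alpha>))"
    by (rule key[OF w i fc_psi[OF w r]])
  then show ?thesis by (simp add: field_simps)
qed

lemma int_abs_ge:
  assumes w: "cmod w < 1" and i: "integrable CM \<psi>" and r: "riesz_proj_eq \<psi> (kw w)"
  shows "2*pi * (1 - (cmod w)\<^sup>2) powr (- \<alpha>) \<le> integral\<^sup>L CM (\<lambda>\<theta>. norm (G \<alpha> w \<theta>) * cmod (\<psi> \<theta>))"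
    and "integrable CM (\<lambda>\<theta>. norm (G \<alpha> w \<theta>) * cmod (\<psi> \<theta>))"
proof -
  have gc: "continuous_on {0..2*pi} (G \<alpha> w)" by (intro continuous_intros w)
  have ii: "integrable CM (\<lambda>\<theta>. cnj (G \<alpha> w \<theta>) * \<psi> \<theta>)"
  proof -
    obtain B where B: "\<forall>x\<in>{0..2*pi}. norm (G \<alpha> w x) \<le> B"
      using compact_imp_bounded[OF compact_continuous_image[OF gc compact_Icc]]
      by (auto simp: bounded_iff)
    have "integrable CM (\<lambda>\<theta>. B * norm (\<psi> \<theta>))" using i by auto
    then show ?thesis
    proof (rule Bochner_Integration.integrable_bound)
      show "(\<lambda>\<theta>. cnj (G \<alpha> w \<theta>) * \<psi> \<theta>) \<in> borel_measurable CM"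
      proof -
        have "(\<lambda>\<theta>. cnj (G \<alpha> w \<theta>)) \<in> borel_measurable CM"
          by (rule cont_meas) (intro continuous_intros w)
        moreover have "\<psi> \<in> borel_measurable CM" using i by auto
        ultimately show ?thesis by (rule borel_measurable_times)
      qed
      show "AE x in CM. norm (cnj (G \<alpha> w x) * \<psi> x) \<le> norm (B * norm (\<psi> x))"
      proof (rule AE_I2)
        fix x assume "x \<in> space CM"
        then have "norm (G \<alpha> w x) \<le> B" using B by simp
        then have "norm (G \<alpha> w x) * norm (\<psi> x) \<le> B * norm (\<psi> x)" by (intro mult_right_mono) auto
        then show "norm (cnj (G \<alpha> w x) * \<psi> x) \<le> norm (B * norm (\<psi> x))" by (simp add: norm_mult)
      qed
    qed
  qed
  then show i2: "integrable CM (\<lambda>\<theta>. norm (G \<alpha> w \<theta>) * cmod (\<psi> \<theta>))"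
    using integrable_norm[OF ii] by (simp add: norm_mult)
  have "2*pi * (1 - (cmod w)\<^sup>2) powr (- \<alpha>) = norm (integral\<^sup>L CM (\<lambda>\<theta>. cnj (G \<alpha> w \<theta>) * \<psi> \<theta>))"
    by (simp add: int_cnjG[OF w i r] norm_mult)
  also have "\<dots> \<le> integral\<^sup>L CM (\<lambda>\<theta>. norm (cnj (G \<alpha> w \<theta>) * \<psi> \<theta>))"
    by (rule integral_norm_bound)
  also have "\<dots> = integral\<^sup>L CM (\<lambda>\<theta>. norm (G \<alpha> w \<theta>) * cmod (\<psi> \<theta>))"
    by (simp add: norm_mult)
  finally show "2*pi * (1 - (cmod w)\<^sup>2) powr (- \<alpha>) \<le> integral\<^sup>L CM (\<lambda>\<theta>. norm (G \<alpha> w \<theta>) * cmod (\<psi> \<theta>))" .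
qed

lemma normG_sq_int: assumes w: "cmod w < 1"
  shows "integral\<^sup>L CM (\<lambda>\<theta>. (norm (G 1 w \<theta>))\<^sup>2) = 2*pi / (1 - (cmod w)\<^sup>2)"
  using parseval(1)[OF w, of 1] T_one[OF w] by (simp add: field_simps)



lemma sq_lt1: "cmod w < 1 \<Longrightarrow> (cmod w)\<^sup>2 < 1"
  by (metis abs_norm_cancel abs_square_less_1)

lemma normG_mult: "cmod w < 1 \<Longrightarrow> norm (G (a + b) w \<theta>) = norm (G a w \<theta>) * norm (G b w \<theta>)"
  by (simp add: G_add norm_mult)

lemma LB_inf:
  assumes w: "cmod w < 1" and L: "in_Lq \<infinity> \<psi>" and r: "riesz_proj_eq \<psi> (kw w)"
  shows "(1 - (cmod w)\<^sup>2) powr (- 1) \<le> Lq_norm \<infinity> \<psi>"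
proof -
  define x where "x = 1 - (cmod w)\<^sup>2"
  have x: "0 < x" "x \<le> 1" using w by (auto simp: x_def abs_square_less_1)
  have m: "\<psi> \<in> borel_measurable CM" using L by (simp add: in_Lq_def)
  have e: "esssup CM (\<lambda>\<theta>. ereal (cmod (\<psi> \<theta>))) < \<infinity>" using L by (simp add: in_Lq_def)
  define E where "E = real_of_ereal (esssup CM (\<lambda>\<theta>. ereal (cmod (\<psi> \<theta>))))"
  have aeE: "AE \<theta> in CM. cmod (\<psi> \<theta>) \<le> E" using esssup_fin(1)[OF m e] by (simp add: E_def)
  have i: "integrable CM \<psi>" by (rule Lq_integrable[OF _ L]) simp
  have n2: "norm (G 2 w \<theta>) = (norm (G 1 w \<theta>))\<^sup>2" for \<theta>
    using normG_mult[OF w, of 1 1 \<theta>] by (simp add: power2_eq_square)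
  have ci: "integrable CM (\<lambda>\<theta>. norm (G 2 w \<theta>) * E)"
    by (intro cont_integrable continuous_intros w)
  have "2*pi * x powr (- 2) \<le> integral\<^sup>L CM (\<lambda>\<theta>. norm (G 2 w \<theta>) * cmod (\<psi> \<theta>))"
    using int_abs_ge(1)[OF w i r, of 2] by (simp add: x_def)
  also have "\<dots> \<le> integral\<^sup>L CM (\<lambda>\<theta>. norm (G 2 w \<theta>) * E)"
    by (rule integral_mono_AE[OF int_abs_ge(2)[OF w i r] ci])
       (use aeE in \<open>eventually_elim, intro mult_left_mono, auto\<close>)
  also have "\<dots> = E * (2*pi / x)"
    using normG_sq_int[OF w] by (simp add: n2 x_def mult.commute)
  finally have "2*pi * x powr (- 2) \<le> E * (2*pi / x)" .
  then have "2*pi * x powr (- 2) \<le> 2*pi * (E / x)" by (simp add: ac_simps)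
  then have "x powr (- 2) \<le> E / x" by (rule mult_left_le_imp_le) simp
  then have "x * x powr (- 2) \<le> E" using x by (simp add: field_simps)
  moreover have "x * x powr (- 2) = x powr (- 1)"
    using x by (simp add: powr_mult_base)
  ultimately show ?thesis by (simp add: Lq_norm_def E_def x_def)
qed

lemma LB_one:
  assumes w: "cmod w < 1" and L: "in_Lq 1 \<psi>" and r: "riesz_proj_eq \<psi> (kw w)"
  shows "1 \<le> Lq_norm 1 \<psi>"
proof -
  have i: "integrable CM \<psi>" by (rule Lq_integrable[OF _ L]) simp
  have "2*pi * (1 - (cmod w)\<^sup>2) powr (- 0) \<le> integral\<^sup>L CM (\<lambda>\<theta>. norm (G 0 w \<theta>) * cmod (\<psi> \<theta>))"
    by (rule int_abs_ge(1)[OF w i r])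
  moreover have "(1 - (cmod w)\<^sup>2) powr (- 0) = 1" using sq_lt1[OF w] by simp
  ultimately have "2*pi \<le> integral\<^sup>L CM (\<lambda>\<theta>. cmod (\<psi> \<theta>))" by (simp add: G_zero[OF w])
  moreover have "0 \<le> integral\<^sup>L CM (\<lambda>\<theta>. cmod (\<psi> \<theta>))" by simp
  ultimately show ?thesis
    unfolding Lq_norm_def Lp_norm_def C_integral
    by (simp add: one_ereal_def[symmetric] field_simps)
qed



lemma LB_fin:
  assumes q1: "1 < q'" and w: "cmod w < 1" and L: "in_Lq (ereal q') \<psi>" and r: "riesz_proj_eq \<psi> (kw w)"
  shows "(1 - (cmod w)\<^sup>2) powr (- (1 - 1/q')) \<le> Lq_norm (ereal q') \<psi>"
proof -
  define x where "x = 1 - (cmod w)\<^sup>2"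
  have x: "0 < x" "x \<le> 1" using sq_lt1[OF w] by (auto simp: x_def)
  define sg where "sg = 1 - 1/q'"
  define qs where "qs = q' / (q' - 1)"
  define P where "P = 2*pi"
  have P: "P > 0" by (simp add: P_def)
  have sg: "0 < sg" "sg < 1" using q1 by (auto simp: sg_def field_simps)
  have qs1: "1 < qs" using q1 by (simp add: qs_def field_simps)
  have conj: "1/q' + 1/qs = 1" using q1 by (simp add: qs_def field_simps)
  have sgqs: "1/qs = sg" using q1 by (simp add: qs_def sg_def field_simps)
  have aqs: "2 * sg * qs = 2" using q1 by (simp add: qs_def sg_def field_simps)
  have m[measurable]: "\<psi> \<in> borel_measurable CM" using L by (simp add: in_Lq_def)
  have i: "integrable CM \<psi>" by (rule Lq_integrable[OF _ L]) (use q1 in simp)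
  have fi: "integrable CM (\<lambda>\<theta>. cmod (\<psi> \<theta>) powr q')"
    using L by (simp add: in_Lq_def C_integrable)
  have gq: "norm (G (2 * sg) w \<theta>) powr qs = (norm (G 1 w \<theta>))\<^sup>2" for \<theta>
  proof -
    have pos: "norm (uu w \<theta>) > 0" using uu_nz[OF w] by simp
    have "norm (G (2 * sg) w \<theta>) powr qs = norm (uu w \<theta>) powr (- (2 * sg * qs))"
      by (simp add: norm_G powr_powr)
    also have "\<dots> = norm (uu w \<theta>) powr (-1) * norm (uu w \<theta>) powr (-1)"
    proof -
      have "- (2 * sg * qs) = -1 + -1" using aqs by simp
      then show ?thesis by (simp only: powr_add)
    qed
    also have "\<dots> = (norm (G 1 w \<theta>))\<^sup>2" by (simp add: norm_G power2_eq_square)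
    finally show ?thesis .
  qed
  have gi: "integrable CM (\<lambda>\<theta>. norm (G (2 * sg) w \<theta>) powr qs)"
    unfolding gq by (intro cont_integrable continuous_intros w)
  have B: "integral\<^sup>L CM (\<lambda>\<theta>. norm (G (2 * sg) w \<theta>) powr qs) = P / x"
    unfolding gq using normG_sq_int[OF w] by (simp add: P_def x_def)
  have low: "P * x powr (- (2 * sg)) \<le> integral\<^sup>L CM (\<lambda>\<theta>. norm (G (2 * sg) w \<theta>) * cmod (\<psi> \<theta>))"
    using int_abs_ge(1)[OF w i r, of "2 * sg"] by (simp add: P_def x_def)
  have lowpos: "0 < P * x powr (- (2 * sg))" using P x by simp
  define A where "A = integral\<^sup>L CM (\<lambda>\<theta>. cmod (\<psi> \<theta>) powr q')"
  have A: "0 < A"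
  proof -
    have "0 \<le> A" unfolding A_def by simp
    moreover have "A \<noteq> 0"
    proof
      assume "A = 0"
      then have "AE \<theta> in CM. cmod (\<psi> \<theta>) powr q' = 0"
        using integral_nonneg_eq_0_iff_AE[OF fi] by (simp add: A_def)
      then have "AE \<theta> in CM. norm (G (2 * sg) w \<theta>) * cmod (\<psi> \<theta>) = 0"
        by eventually_elim simp
      then have "integral\<^sup>L CM (\<lambda>\<theta>. norm (G (2 * sg) w \<theta>) * cmod (\<psi> \<theta>)) = integral\<^sup>L CM (\<lambda>\<theta>. 0)"
      proof (rule integral_cong_AE[rotated 2])
        have mG: "(\<lambda>\<theta>. norm (G (2 * sg) w \<theta>)) \<in> borel_measurable CM"
          by (rule cont_meas) (intro continuous_intros w)
        show "(\<lambda>\<theta>. norm (G (2 * sg) w \<theta>) * cmod (\<psi> \<theta>)) \<in> borel_measurable CM"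
          using mG by measurable
      qed simp
      then show False using low lowpos by simp
    qed
    ultimately show ?thesis by simp
  qed
  have "integral\<^sup>L CM (\<lambda>\<theta>. cmod (\<psi> \<theta>) * norm (G (2 * sg) w \<theta>)) \<le> A powr (1/q') * (P / x) powr (1/qs)"
    using holder(2)[OF q1 qs1 conj _ _ _ _ fi gi] A B P x
    by (simp add: A_def cont_meas continuous_intros w)
  then have "P * x powr (- (2 * sg)) \<le> A powr (1/q') * (P powr sg / x powr sg)"
    using low P x by (simp add: sgqs powr_divide mult.commute)
  then have "P * x powr (- (2 * sg)) * x powr sg / P powr sg \<le> A powr (1/q')"
    using P x by (simp add: field_simps)
  moreover have "P * x powr (- (2 * sg)) * x powr sg / P powr sg = P powr (1/q') * x powr (- sg)"
  proof -
    have "x powr (- (2 * sg)) * x powr sg = x powr (- sg)" by (simp add: powr_add[symmetric])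
    moreover have "P / P powr sg = P powr (1/q')"
    proof -
      have "P powr (1/q') = P powr (1 - sg)" by (simp add: sg_def)
      also have "\<dots> = P powr 1 / P powr sg" by (rule powr_diff)
      finally show ?thesis using P by simp
    qed
    moreover have "P * x powr (- (2 * sg)) * x powr sg / P powr sg = (P / P powr sg) * (x powr (- (2 * sg)) * x powr sg)"
      by simp
    ultimately show ?thesis by simp
  qed
  ultimately have "P powr (1/q') * x powr (- sg) \<le> A powr (1/q')" by simp
  then have "x powr (- sg) \<le> A powr (1/q') / P powr (1/q')" using P by (simp add: field_simps)
  also have "\<dots> = (A / P) powr (1/q')" using A P by (simp add: powr_divide)
  finally show ?thesis using q1
    unfolding Lq_norm_def Lp_norm_def C_integral
    by (simp add: A_def P_def x_def sg_def)
qed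



definition psib :: "real \<Rightarrow> complex \<Rightarrow> real \<Rightarrow> complex" where
  "psib \<beta> w \<theta> = of_real ((1 - (cmod w)\<^sup>2) powr \<beta>) * kw w \<theta> * cnj (G \<beta> w \<theta>)"

lemma kw_cont[continuous_intros]: "cmod w < 1 \<Longrightarrow> continuous_on A (kw w)"
proof -
  assume w: "cmod w < 1"
  have "kw w = G 1 w" using G_one[OF w] by auto
  then show ?thesis using G_cont[OF w] by simp
qed

lemma psib_cont: "cmod w < 1 \<Longrightarrow> continuous_on A (psib \<beta> w)"
  unfolding psib_def by (intro continuous_intros)

lemma psib_riesz:
  assumes w: "cmod w < 1"
  shows "riesz_proj_eq (psib \<beta> w) (kw w)"
  unfolding riesz_proj_eq_def
proof (intro conjI allI impI)
  fix n :: int assume n: "0 \<le> n"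
  define x where "x = 1 - (cmod w)\<^sup>2"
  have xp: "x > 0" using sq_lt1[OF w] by (simp add: x_def)
  define \<phi> where "\<phi> \<theta> = ee (-n) \<theta> * kw w \<theta>" for \<theta>
  have phi: "integrable CM \<phi>" unfolding \<phi>_def by (intro cont_integrable continuous_intros w)
  have fc: "fourier_coeff \<phi> (int m) = cnj w ^ nat n * cnj w ^ m" for m
    unfolding \<phi>_def fc_shift fc_kw[OF w] using n
    by (simp add: power_add[symmetric] nat_add_distrib add.commute)
  have k: "integral\<^sup>L CM (\<lambda>\<theta>. cnj (G \<beta> w \<theta>) * \<phi> \<theta>) / (2*pi) = cnj w ^ nat n * of_real (x powr (- \<beta>))"
    unfolding x_def by (rule key[OF w phi fc])
  have "fourier_coeff (psib \<beta> w) n = integral\<^sup>L CM (\<lambda>\<theta>. of_real (x powr \<beta>) * (cnj (G \<beta> w \<theta>) * \<phi> \<theta>)) / (2*pi)"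
    unfolding fc_alt psib_def \<phi>_def x_def by (simp add: mult_ac)
  also have "\<dots> = of_real (x powr \<beta>) * (integral\<^sup>L CM (\<lambda>\<theta>. cnj (G \<beta> w \<theta>) * \<phi> \<theta>) / (2*pi))"
    by simp
  also have "\<dots> = cnj w ^ nat n * of_real (x powr \<beta> * x powr (- \<beta>))" unfolding k by simp
  also have "x powr \<beta> * x powr (- \<beta>) = 1" using xp by (simp add: powr_add[symmetric])
  finally show "fourier_coeff (psib \<beta> w) n = fourier_coeff (kw w) n"
    using n by (simp add: fc_kw[OF w])
next
  fix n :: int assume "n < 0"
  then show "fourier_coeff (kw w) n = 0" by (simp add: fc_kw[OF w])
qed

lemma norm_psib:
  assumes w: "cmod w < 1"
  shows "cmod (psib \<beta> w \<theta>) = (1 - (cmod w)\<^sup>2) powr \<beta> * norm (uu w \<theta>) powr (- (1 + \<beta>))"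
proof -
  have pos: "norm (uu w \<theta>) > 0" using uu_nz[OF w] by simp
  have "cmod (psib \<beta> w \<theta>) = (1 - (cmod w)\<^sup>2) powr \<beta> * (1 / norm (uu w \<theta>)) * norm (uu w \<theta>) powr (- \<beta>)"
    by (simp add: psib_def norm_mult norm_kw[OF w] norm_G)
  also have "1 / norm (uu w \<theta>) = norm (uu w \<theta>) powr (-1)" using pos by (simp add: powr_minus_divide)
  also have "(1 - (cmod w)\<^sup>2) powr \<beta> * norm (uu w \<theta>) powr (-1) * norm (uu w \<theta>) powr (- \<beta>) =
     (1 - (cmod w)\<^sup>2) powr \<beta> * (norm (uu w \<theta>) powr (-1) * norm (uu w \<theta>) powr (- \<beta>))"
    by (simp only: mult.assoc)
  also have "norm (uu w \<theta>) powr (-1) * norm (uu w \<theta>) powr (- \<beta>) = norm (uu w \<theta>) powr (- (1 + \<beta>))"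
    by (simp only: powr_add[symmetric]) simp
  finally show ?thesis .
qed



definition beta :: "ereal \<Rightarrow> real" where
  "beta q = (if q = \<infinity> then -1 else 2 / real_of_ereal q - 1)"

lemma comp_fin:
  assumes q1: "1 \<le> q'" and w: "cmod w < 1"
  shows "in_Lq (ereal q') (psib (2/q' - 1) w)"
    and "Lq_norm (ereal q') (psib (2/q' - 1) w) = (1 - (cmod w)\<^sup>2) powr (- (1 - 1/q'))"
proof -
  define x where "x = 1 - (cmod w)\<^sup>2"
  have xp: "x > 0" using sq_lt1[OF w] by (simp add: x_def)
  define \<beta> where "\<beta> = 2/q' - 1"
  have pw: "cmod (psib \<beta> w \<theta>) powr q' = x powr (\<beta> * q') * (norm (G 1 w \<theta>))\<^sup>2" for \<theta>
  proof -
    have pos: "norm (uu w \<theta>) > 0" using uu_nz[OF w] by simp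
    have "cmod (psib \<beta> w \<theta>) powr q' = (x powr \<beta>) powr q' * (norm (uu w \<theta>) powr (- (1 + \<beta>))) powr q'"
      by (simp add: norm_psib[OF w] x_def powr_mult)
    also have "\<dots> = x powr (\<beta> * q') * norm (uu w \<theta>) powr (- ((1 + \<beta>) * q'))"
      by (simp add: powr_powr algebra_simps)
    also have "(1 + \<beta>) * q' = 2" using q1 by (simp add: \<beta>_def field_simps)
    also have "norm (uu w \<theta>) powr (- 2) = norm (uu w \<theta>) powr (-1) * norm (uu w \<theta>) powr (-1)"
      by (simp only: powr_add[symmetric]) simp
    also have "\<dots> = (norm (G 1 w \<theta>))\<^sup>2" by (simp add: norm_G power2_eq_square)
    finally show ?thesis .
  qed
  have "in_Lq (ereal q') (psib \<beta> w)"
  proof -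
    have "psib \<beta> w \<in> borel_measurable CM" by (intro cont_meas psib_cont w)
    moreover have "integrable CM (\<lambda>\<theta>. x powr (\<beta> * q') * (norm (G 1 w \<theta>))\<^sup>2)"
      by (intro cont_integrable continuous_intros w)
    moreover have "(\<lambda>\<theta>. cmod (psib \<beta> w \<theta>) powr q') = (\<lambda>\<theta>. x powr (\<beta> * q') * (norm (G 1 w \<theta>))\<^sup>2)"
      by (rule ext) (rule pw)
    ultimately show ?thesis unfolding in_Lq_def C_integrable by (simp add: circle_measure_def[symmetric])
  qed
  then show "in_Lq (ereal q') (psib (2/q' - 1) w)" by (simp add: \<beta>_def)
  have "(LINT \<theta>:{0..2*pi}|lborel. cmod (psib \<beta> w \<theta>) powr q') = x powr (\<beta> * q') * (2*pi / x)"
    unfolding C_integral pw using normG_sq_int[OF w] by (simp add: x_def)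
  then have "Lq_norm (ereal q') (psib \<beta> w) = (x powr (\<beta> * q') / x) powr (1/q')"
    using q1 by (simp add: Lq_norm_def Lp_norm_def)
  also have "x powr (\<beta> * q') / x = x powr (\<beta> * q' - 1)"
    using xp by (simp add: powr_diff)
  also have "\<dots> powr (1/q') = x powr ((\<beta> * q' - 1) / q')" by (simp add: powr_powr)
  also have "(\<beta> * q' - 1) / q' = - (1 - 1/q')" using q1 by (simp add: \<beta>_def field_simps)
  finally show "Lq_norm (ereal q') (psib (2/q' - 1) w) = (1 - (cmod w)\<^sup>2) powr (- (1 - 1/q'))"
    by (simp add: \<beta>_def x_def)
qed

lemma comp_inf:
  assumes w: "cmod w < 1"
  shows "in_Lq \<infinity> (psib (-1) w)"
    and "Lq_norm \<infinity> (psib (-1) w) \<le> (1 - (cmod w)\<^sup>2) powr (- 1)"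
proof -
  define x where "x = 1 - (cmod w)\<^sup>2"
  have xp: "x > 0" using sq_lt1[OF w] by (simp add: x_def)
  have n: "cmod (psib (-1) w \<theta>) = x powr (-1)" for \<theta>
    using uu_nz[OF w, of \<theta>] by (simp add: norm_psib[OF w] x_def)
  have m: "psib (-1) w \<in> borel_measurable CM" by (intro cont_meas psib_cont w)
  have "(\<lambda>\<theta>. ereal (cmod (psib (-1) w \<theta>))) \<in> borel_measurable CM" using m by measurable
  then have le: "esssup CM (\<lambda>\<theta>. ereal (cmod (psib (-1) w \<theta>))) \<le> ereal (x powr (-1))"
    by (rule esssup_I) (simp add: n)
  then show "in_Lq \<infinity> (psib (-1) w)"
    using m by (auto simp: in_Lq_def circle_measure_def[symmetric] intro: le_less_trans)
  show "Lq_norm \<infinity> (psib (-1) w) \<le> (1 - (cmod w)\<^sup>2) powr (- 1)"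
    unfolding Lq_norm_def x_def[symmetric] using le
    by (cases "esssup CM (\<lambda>\<theta>. ereal (cmod (psib (-1) w \<theta>)))") auto
qed

lemma four_fin: "four_over_conj (ereal q') / 4 = 1 - 1/q'"
  by (simp add: four_over_conj_def)

lemma comp:
  assumes q: "1 \<le> q" and w: "cmod w < 1"
  shows "in_Lq q (psib (beta q) w)" and "riesz_proj_eq (psib (beta q) w) (kw w)"
    and "Lq_norm q (psib (beta q) w) \<le> (1 - (cmod w)\<^sup>2) powr (- (four_over_conj q / 4))"
proof -
  show "riesz_proj_eq (psib (beta q) w) (kw w)" by (rule psib_riesz[OF w])
  have "in_Lq q (psib (beta q) w) \<and> Lq_norm q (psib (beta q) w) \<le> (1 - (cmod w)\<^sup>2) powr (- (four_over_conj q / 4))"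
  proof (cases "q = \<infinity>")
    case True
    then show ?thesis using comp_inf[OF w] by (simp add: beta_def four_over_conj_def)
  next
    case False
    then obtain q' where q': "q = ereal q'" using q by (cases q) auto
    then have q1: "1 \<le> q'" using q by simp
    show ?thesis using comp_fin[OF q1 w] q' by (simp add: beta_def four_fin)
  qed
  then show "in_Lq q (psib (beta q) w)" "Lq_norm q (psib (beta q) w) \<le> (1 - (cmod w)\<^sup>2) powr (- (four_over_conj q / 4))"
    by auto
qed

lemma LB:
  assumes q: "1 \<le> q" and w: "cmod w < 1" and L: "in_Lq q \<psi>" and r: "riesz_proj_eq \<psi> (kw w)"
  shows "(1 - (cmod w)\<^sup>2) powr (- (four_over_conj q / 4)) \<le> Lq_norm q \<psi>"
proof (cases "q = \<infinity>")
  case True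
  then show ?thesis using LB_inf[OF w _ r] L by (simp add: four_over_conj_def)
next
  case False
  then obtain q' where q': "q = ereal q'" using q by (cases q) auto
  then have q1: "1 \<le> q'" using q by simp
  show ?thesis
  proof (cases "q' = 1")
    case True
    then show ?thesis using LB_one[OF w _ r] L q' sq_lt1[OF w] by (simp add: four_over_conj_def one_ereal_def)
  next
    case False
    then have "1 < q'" using q1 by simp
    from LB_fin[OF this w _ r] L q' show ?thesis by (simp add: four_fin)
  qed
qed



lemma exists_y:
  fixes c k :: real
  assumes c: "0 \<le> c" "c < k"
  shows "\<exists>y. 0 < y \<and> y < 1 \<and> (1 - y) powr (- c) < 1 + k * y"
proof -
  define f where "f y = (1 - y) powr (- c)" for y :: real
  have "DERIV (\<lambda>y. (1 - y) powr (- c)) 0 :> ((1 - 0) powr (- c)) * (0 * ln (1 - 0) + (-1) * (- c) / (1 - 0))"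
    by (rule DERIV_powr) (auto intro!: derivative_eq_intros)
  then have "DERIV f 0 :> c" unfolding f_def[abs_def] by simp
  then have lim: "((\<lambda>h. (f (0 + h) - f 0) / h) \<longlongrightarrow> c) (at 0)" by (simp add: DERIV_def)
  have "eventually (\<lambda>h. (f (0 + h) - f 0) / h < k) (at 0)"
    by (rule order_tendstoD(2)[OF lim c(2)])
  then obtain d where d: "d > 0" "\<And>h. h \<noteq> 0 \<Longrightarrow> dist h 0 < d \<Longrightarrow> (f (0 + h) - f 0) / h < k"
    unfolding eventually_at by auto
  define y where "y = min (d/2) (1/2)"
  have y: "0 < y" "y < 1" "y \<noteq> 0" "dist y 0 < d" using d(1) by (auto simp: y_def)
  have "(f y - f 0) / y < k" using d(2)[OF y(3,4)] by simp
  then have "f y - 1 < k * y" using y by (simp add: f_def divide_less_eq)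
  then show ?thesis using y by (auto simp: f_def)
qed

lemma fq_nonneg: "1 \<le> q \<Longrightarrow> 0 \<le> four_over_conj q"
proof (cases q)
  case (real r)
  assume "1 \<le> q" then have "1 \<le> r" using real by simp
  then show ?thesis using real by (simp add: four_over_conj_def field_simps)
qed (auto simp: four_over_conj_def)

lemma Lp_kw_bound:
  assumes w: "cmod w < 1" and p: "0 < p"
  shows "Lp_norm p (kw w) = (\<Sum>n. (norm (cf (p/2) w n))\<^sup>2) powr (1/p)"
  using Lp_kw[OF w] p by simp

lemma suff:
  assumes q: "1 \<le> q" and p: "0 \<le> p" "p \<le> four_over_conj q"
    and w: "cmod w < 1" and L: "in_Lq q \<psi>" and r: "riesz_proj_eq \<psi> (kw w)"
  shows "Lp_norm p (kw w) \<le> Lq_norm q \<psi>"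
proof -
  define x where "x = 1 - (cmod w)\<^sup>2"
  have x: "0 < x" "x \<le> 1" using sq_lt1[OF w] by (auto simp: x_def)
  define fq where "fq = four_over_conj q"
  have fq: "0 \<le> fq" using fq_nonneg[OF q] by (simp add: fq_def)
  have lb: "x powr (- (fq / 4)) \<le> Lq_norm q \<psi>" using LB[OF q w L r] by (simp add: x_def fq_def)
  show ?thesis
  proof (cases "p = 0")
    case True
    have "1 powr (- (fq / 4)) \<le> x powr (- (fq / 4))"
      by (rule powr_mono2') (use x fq in auto)
    then show ?thesis using True lb Lp_kw0[OF w] by simp
  next
    case False
    then have pp: "0 < p" using p by simp
    define b where "b = p * fq / 4"
    have ab: "(p/2)\<^sup>2 \<le> b"
    proof -
      have "p * p \<le> p * fq" using p pp by (intro mult_left_mono) (auto simp: fq_def)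
      then show ?thesis by (simp add: b_def power2_eq_square)
    qed
    have T0: "0 \<le> (\<Sum>n. (norm (cf (p/2) w n))\<^sup>2)"
      by (rule suminf_nonneg[OF parseval(2)[OF w]]) simp
    have "Lp_norm p (kw w) = (\<Sum>n. (norm (cf (p/2) w n))\<^sup>2) powr (1/p)" by (rule Lp_kw_bound[OF w pp])
    also have "\<dots> \<le> (x powr (- b)) powr (1/p)"
      using upper[OF w _ ab] pp T0 by (intro powr_mono2) (auto simp: x_def)
    also have "\<dots> = x powr (- (fq / 4))" using pp by (simp add: powr_powr b_def)
    finally show ?thesis using lb by simp
  qed
qed



lemma necc:
  assumes q: "1 \<le> q" and p: "0 \<le> p"
    and H: "\<forall>w. cmod w < 1 \<longrightarrow> (\<forall>\<psi>. in_Lq q \<psi> \<and> riesz_proj_eq \<psi> (kw w) \<longrightarrow>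
                  Lp_norm p (kw w) \<le> Lq_norm q \<psi>)"
  shows "p \<le> four_over_conj q"
proof (rule ccontr)
  assume "\<not> p \<le> four_over_conj q"
  then have pf: "four_over_conj q < p" by simp
  define fq where "fq = four_over_conj q"
  have fq: "0 \<le> fq" using fq_nonneg[OF q] by (simp add: fq_def)
  have pp: "0 < p" using pf fq by (simp add: fq_def)
  define c where "c = p * fq / 4"
  define k where "k = (p/2)\<^sup>2"
  have ck: "0 \<le> c" "c < k"
  proof -
    show "0 \<le> c" using p fq by (simp add: c_def)
    have "p * fq < p * p" using pp pf by (simp add: fq_def)
    then show "c < k" by (simp add: c_def k_def power2_eq_square)
  qed
  obtain y where y: "0 < y" "y < 1" "(1 - y) powr (- c) < 1 + k * y"
    using exists_y[OF ck] by blast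
  define w where "w = complex_of_real (sqrt y)"
  have cw: "cmod w = sqrt y" using y by (simp add: w_def)
  have w: "cmod w < 1" using y by (simp add: cw real_sqrt_lt_1_iff)
  have cw2: "(cmod w)\<^sup>2 = y" using y by (simp add: cw)
  have "Lp_norm p (kw w) \<le> Lq_norm q (psib (beta q) w)"
    using H w comp(1,2)[OF q w] by blast
  also have "\<dots> \<le> (1 - y) powr (- (fq / 4))" using comp(3)[OF q w] by (simp add: cw2 fq_def)
  finally have le1: "Lp_norm p (kw w) \<le> (1 - y) powr (- (fq / 4))" .
  have "(1 + k * y) powr (1/p) \<le> (\<Sum>n. (norm (cf (p/2) w n))\<^sup>2) powr (1/p)"
    using lower[OF w, of "p/2"] p pp y by (intro powr_mono2) (auto simp: cw2 k_def)
  also have "\<dots> = Lp_norm p (kw w)" by (rule Lp_kw_bound[OF w pp, symmetric])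
  finally have "(1 + k * y) powr (1/p) \<le> (1 - y) powr (- (fq / 4))" using le1 by simp
  then have "((1 + k * y) powr (1/p)) powr p \<le> ((1 - y) powr (- (fq / 4))) powr p"
    using pp by (intro powr_mono2) auto
  moreover have "((1 + k * y) powr (1/p)) powr p = 1 + k * y"
    using pp y by (simp add: powr_powr k_def)
  moreover have "((1 - y) powr (- (fq / 4))) powr p = (1 - y) powr (- c)"
    by (simp add: powr_powr c_def mult.commute)
  ultimately show False using y(3) by simp
qed

lemma min_eq:
  assumes q: "1 \<le> q" and w: "cmod w < 1" and m: "minimal_preimage q w \<psi>"
  shows "Lq_norm q \<psi> = (1 - (cmod w)\<^sup>2) powr (- (four_over_conj q / 4))"
proof -
  have L: "in_Lq q \<psi>" and r: "riesz_proj_eq \<psi> (kw w)" using m by (auto simp: minimal_preimage_def)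
  have "Lq_norm q \<psi> \<le> Lq_norm q (psib (beta q) w)"
    using m comp(1,2)[OF q w] by (auto simp: minimal_preimage_def)
  also have "\<dots> \<le> (1 - (cmod w)\<^sup>2) powr (- (four_over_conj q / 4))" by (rule comp(3)[OF q w])
  finally show ?thesis using LB[OF q w L r] by simp
qed

lemma Lp_kw_2: "cmod w < 1 \<Longrightarrow> Lp_norm 2 (kw w) = (1 - (cmod w)\<^sup>2) powr (- (2 / 4))"
proof -
  assume w: "cmod w < 1"
  have x: "0 < 1 - (cmod w)\<^sup>2" using sq_lt1[OF w] by simp
  have "Lp_norm 2 (kw w) = (1 / (1 - (cmod w)\<^sup>2)) powr (1/2)"
    using Lp_kw_bound[OF w, of 2] T_one[OF w] by simp
  also have "\<dots> = (1 - (cmod w)\<^sup>2) powr (- (2 / 4))"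
    using x by (simp add: powr_divide powr_minus_divide)
  finally show ?thesis .
qed

lemma strict_part:
  assumes q: "1 \<le> q" "q \<noteq> 1" "q \<noteq> 2" and w: "cmod w < 1" "w \<noteq> 0"
    and L: "in_Lq q \<psi>" and r: "riesz_proj_eq \<psi> (kw w)"
  shows "Lp_norm (four_over_conj q) (kw w) < Lq_norm q \<psi>"
proof -
  define fq where "fq = four_over_conj q"
  define x where "x = 1 - (cmod w)\<^sup>2"
  have x: "0 < x" using sq_lt1[OF w(1)] by (simp add: x_def)
  have fqpos: "0 < fq" "fq \<noteq> 2"
  proof -
    have "0 < fq \<and> fq \<noteq> 2"
    proof (cases q)
      case (real r)
      then have "1 < r" "r \<noteq> 2" using q by (auto simp: one_ereal_def)
      then show ?thesis using real by (simp add: fq_def four_over_conj_def field_simps)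
    qed (use q in \<open>auto simp: fq_def four_over_conj_def\<close>)
    then show "0 < fq" "fq \<noteq> 2" by auto
  qed
  have a: "0 < fq / 2" "fq / 2 \<noteq> 1" using fqpos by auto
  have T0: "0 \<le> (\<Sum>n. (norm (cf (fq/2) w n))\<^sup>2)"
    by (rule suminf_nonneg[OF parseval(2)[OF w(1)]]) simp
  have "Lp_norm fq (kw w) = (\<Sum>n. (norm (cf (fq/2) w n))\<^sup>2) powr (1/fq)"
    by (rule Lp_kw_bound[OF w(1) fqpos(1)])
  also have "\<dots> < (x powr (- ((fq/2)\<^sup>2))) powr (1/fq)"
    using upper_strict[OF w a] fqpos T0 by (intro powr_less_mono2) (auto simp: x_def)
  also have "\<dots> = x powr (- (fq / 4))" using fqpos by (simp add: powr_powr power2_eq_square)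
  also have "\<dots> \<le> Lq_norm q \<psi>" using LB[OF q(1) w(1) L r] by (simp add: x_def fq_def)
  finally show ?thesis by (simp add: fq_def)
qed

lemma w0_part:
  assumes q: "1 \<le> q" "q \<noteq> 1" and m: "minimal_preimage q 0 \<psi>"
  shows "Lq_norm q \<psi> = Lp_norm (four_over_conj q) (kw 0)"
proof -
  define fq where "fq = four_over_conj q"
  have fqpos: "0 < fq"
  proof (cases q)
    case (real r)
    then have "1 < r" using q by (auto simp: one_ereal_def)
    then show ?thesis using real by (simp add: fq_def four_over_conj_def field_simps)
  qed (use q in \<open>auto simp: fq_def four_over_conj_def\<close>)
  have w: "cmod (0::complex) < 1" by simp
  have "Lq_norm q \<psi> = 1" using min_eq[OF q(1) w m] by simp
  moreover have "(\<Sum>n. (norm (cf (fq/2) 0 n))\<^sup>2) = 1"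
  proof (rule antisym)
    show "(\<Sum>n. (norm (cf (fq/2) 0 n))\<^sup>2) \<le> 1"
      using upper[OF w, of "fq/2" "(fq/2)\<^sup>2"] fqpos by simp
    show "1 \<le> (\<Sum>n. (norm (cf (fq/2) 0 n))\<^sup>2)"
      using lower[OF w, of "fq/2"] fqpos by simp
  qed
  moreover have "Lp_norm fq (kw 0) = (\<Sum>n. (norm (cf (fq/2) 0 n))\<^sup>2) powr (1/fq)"
    by (rule Lp_kw_bound[OF w fqpos])
  ultimately show ?thesis by (simp add: fq_def)
qed

theorem theorem8:
  fixes q :: ereal
  assumes "1 \<le> q"
  shows "(\<forall>p::real. p \<ge> 0 \<longrightarrow>
            ((\<forall>w. cmod w < 1 \<longrightarrow> (\<forall>\<psi>. in_Lq q \<psi> \<and> riesz_proj_eq \<psi> (kw w) \<longrightarrow>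
                  Lp_norm p (kw w) \<le> Lq_norm q \<psi>))
             \<longleftrightarrow> p \<le> four_over_conj q))
      \<and> ((q = 1 \<or> q = 2) \<longrightarrow>
            (\<forall>w \<psi>. cmod w < 1 \<and> minimal_preimage q w \<psi> \<longrightarrow>
               Lq_norm q \<psi> = Lp_norm (four_over_conj q) (kw w)))
      \<and> (\<not> (q = 1 \<or> q = 2) \<longrightarrow>
            (\<forall>w \<psi>. cmod w < 1 \<and> minimal_preimage q w \<psi> \<longrightarrow>
               (Lq_norm q \<psi> = Lp_norm (four_over_conj q) (kw w) \<longleftrightarrow> w = 0)))"
proof (intro conjI allI impI)
  fix p :: real assume p: "0 \<le> p"
  show "(\<forall>w. cmod w < 1 \<longrightarrow> (\<forall>\<psi>. in_Lq q \<psi> \<and> riesz_proj_eq \<psi> (kw w) \<longrightarrow>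
                  Lp_norm p (kw w) \<le> Lq_norm q \<psi>)) \<longleftrightarrow> p \<le> four_over_conj q"
  proof
    assume H: "\<forall>w. cmod w < 1 \<longrightarrow> (\<forall>\<psi>. in_Lq q \<psi> \<and> riesz_proj_eq \<psi> (kw w) \<longrightarrow>
                  Lp_norm p (kw w) \<le> Lq_norm q \<psi>)"
    show "p \<le> four_over_conj q" by (rule necc[OF assms p H])
  next
    assume "p \<le> four_over_conj q"
    then show "\<forall>w. cmod w < 1 \<longrightarrow> (\<forall>\<psi>. in_Lq q \<psi> \<and> riesz_proj_eq \<psi> (kw w) \<longrightarrow>
                  Lp_norm p (kw w) \<le> Lq_norm q \<psi>)"
      using suff[OF assms p] by blast
  qed
next
  fix w \<psi>
  assume q12: "q = 1 \<or> q = 2" and wm: "cmod w < 1 \<and> minimal_preimage q w \<psi>"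
  then have w: "cmod w < 1" and m: "minimal_preimage q w \<psi>" by auto
  have e: "Lq_norm q \<psi> = (1 - (cmod w)\<^sup>2) powr (- (four_over_conj q / 4))" by (rule min_eq[OF assms w m])
  show "Lq_norm q \<psi> = Lp_norm (four_over_conj q) (kw w)"
  proof (cases "q = 1")
    case True
    have "four_over_conj q = 0" using True by (simp add: four_over_conj_def)
    then show ?thesis using e Lp_kw0[OF w] sq_lt1[OF w] by simp
  next
    case False
    then have q2: "q = 2" using q12 by simp
    have "four_over_conj q = 2" using q2 by (simp add: four_over_conj_def)
    then show ?thesis using e Lp_kw_2[OF w] by simp
  qed
next
  fix w \<psi>
  assume q12: "\<not> (q = 1 \<or> q = 2)" and wm: "cmod w < 1 \<and> minimal_preimage q w \<psi>"
  then have w: "cmod w < 1" and m: "minimal_preimage q w \<psi>" by auto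
  show "Lq_norm q \<psi> = Lp_norm (four_over_conj q) (kw w) \<longleftrightarrow> w = 0"
  proof
    assume eq: "Lq_norm q \<psi> = Lp_norm (four_over_conj q) (kw w)"
    show "w = 0"
    proof (rule ccontr)
      assume "w \<noteq> 0"
      have L: "in_Lq q \<psi>" and r: "riesz_proj_eq \<psi> (kw w)" using m by (auto simp: minimal_preimage_def)
      from strict_part[OF assms _ _ w \<open>w \<noteq> 0\<close> L r] q12 eq show False by simp
    qed
  next
    assume "w = 0"
    then show "Lq_norm q \<psi> = Lp_norm (four_over_conj q) (kw w)"
      using w0_part[OF assms _ ] m q12 by auto
  qed
qed


end
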